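(* Let $n\ge1$, $0\le c_0<c_1<\dots<c_n$, $v_0\ge v_1\ge\dots\ge v_n>0$, $0\le\rho_k<\frac{v_k}{2}$ ($k=0,\dots,n$), and let $B=(b_{jk})_{j,k=0}^n$ with $b_{jk}=v_k-c_k$ if $j>k$, $b_{kk}=\frac{v_k}{2}-c_k-\rho_k$, $b_{jk}=-c_j$ if $j<k$. For $k=0,\dots,n$ let $B^{(k)}$ be the matrix obtained from $B$ by replacing column $k$ with the all-ones vector $\mathbf{1}_{n+1}$. Then $$\det B^{(n)}=\prod_{j=0}^{n-1}\Big(-\frac{v_j}{2}-\rho_j\Big),$$ and for $k=0,\dots,n-1$, $$\det B^{(k)}=\det(\tilde B_{n-k}+c_kJ_{n-k})\prod_{j=0}^{k-1}\Big(-\frac{v_j}{2}-\rho_j\Big),$$ where $\tilde B_{n-k}$ is the $(n-k)\times(n-k)$ principal submatrix of $B$ situated in the bottom right-hand corner (rows and columns $k+1,\dots,n$) and $J_{n-k}$ is the $(n-k)\times(n-k)$ all-ones matrix.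
   Context: Rows and columns of $B$ are indexed $0,\dots,n$. An empty product equals $1$. *)

theory Defs
  imports "Jordan_Normal_Form.Determinant"
begin

definition Bmat :: "nat \<Rightarrow> (nat \<Rightarrow> real) \<Rightarrow> (nat \<Rightarrow> real) \<Rightarrow> (nat \<Rightarrow> real) \<Rightarrow> real mat" where
  "Bmat n c v \<rho> = mat (n+1) (n+1) (\<lambda>(j,k).
     if j > k then v k - c k
     else if j = k then v k / 2 - c k - \<rho> k
     else - c j)"

definition replace_col_ones :: "real mat \<Rightarrow> nat \<Rightarrow> real mat" where
  "replace_col_ones M k = mat (dim_row M) (dim_col M) (\<lambda>(i,j). if j = k then 1 else M $$ (i,j))"

definition bottom_right :: "real mat \<Rightarrow> nat \<Rightarrow> nat \<Rightarrow> real mat" where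
  "bottom_right M n k = mat (n-k) (n-k) (\<lambda>(i,j). M $$ (i+k+1, j+k+1))"

definition ones_mat :: "nat \<Rightarrow> real mat" where
  "ones_mat m = mat m m (\<lambda>_. 1)"

end

theory Submission
  imports Defs
begin

lemma peel1:
  fixes A :: "real mat"
  assumes A: "A \<in> carrier_mat (Suc m) (Suc m)"
    and z: "\<And>i. 0 < i \<Longrightarrow> i < Suc m \<Longrightarrow> A $$ (i,0) = 0"
  shows "det A = A $$ (0,0) * det (mat_delete A 0 0)"
proof -
  have "det A = (\<Sum>i<Suc m. A $$ (i,0) * cofactor A i 0)"
    using laplace_expansion_column[OF A] by simp
  also have "\<dots> = A $$ (0,0) * cofactor A 0 0"
    by (subst sum.lessThan_Suc_shift) (simp add: z)
  finally show ?thesis by (simp add: cofactor_def)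
qed

lemma peel:
  fixes A :: "real mat"
  assumes "A \<in> carrier_mat m m" "k \<le> m"
    "\<And>l i. l < k \<Longrightarrow> l < i \<Longrightarrow> i < m \<Longrightarrow> A $$ (i,l) = 0"
  shows "det A = (\<Prod>l<k. A $$ (l,l)) * det (mat (m-k) (m-k) (\<lambda>(i,j). A $$ (i+k,j+k)))"
  using assms
proof (induction k arbitrary: A m)
  case 0
  have "mat m m (\<lambda>(i,j). A $$ (i,j)) = A"
    using 0 by (intro eq_matI) auto
  then show ?case by simp
next
  case (Suc k)
  obtain m' where m: "m = Suc m'" using Suc.prems(2) by (cases m) auto
  have A: "A \<in> carrier_mat (Suc m') (Suc m')" using Suc.prems m by simp
  have d1: "det A = A $$ (0,0) * det (mat_delete A 0 0)"
    by (rule peel1[OF A]) (use Suc.prems m in auto)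
  define D where "D = mat_delete A 0 0"
  have Dc: "D \<in> carrier_mat m' m'" using A unfolding D_def mat_delete_def by auto
  have De: "\<And>i j. i < m' \<Longrightarrow> j < m' \<Longrightarrow> D $$ (i,j) = A $$ (Suc i, Suc j)"
    unfolding D_def mat_delete_def using A by auto
  have IH: "det D = (\<Prod>l<k. D $$ (l,l)) * det (mat (m'-k) (m'-k) (\<lambda>(i,j). D $$ (i+k,j+k)))"
  proof (rule Suc.IH[OF Dc])
    show "k \<le> m'" using Suc.prems m by simp
    fix l i assume "l < k" "l < i" "i < m'"
    then show "D $$ (i,l) = 0" using De Suc.prems(3)[of "Suc l" "Suc i"] m by auto
  qed
  have eqm: "mat (m'-k) (m'-k) (\<lambda>(i,j). D $$ (i+k,j+k)) = mat (m - Suc k) (m - Suc k) (\<lambda>(i,j). A $$ (i+Suc k,j+Suc k))"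
    by (rule eq_matI) (auto simp: m De)
  have eqp: "(\<Prod>l<k. D $$ (l,l)) = (\<Prod>l<k. A $$ (Suc l, Suc l))"
    by (rule prod.cong) (use De Suc.prems m in auto)
  show ?case
    unfolding d1 D_def[symmetric] IH eqm eqp
    by (subst prod.lessThan_Suc_shift) simp
qed



lemma main:
  fixes n k :: nat and c v \<rho> :: "nat \<Rightarrow> real"
  assumes kn: "k \<le> n"
  shows "det (replace_col_ones (Bmat n c v \<rho>) k) =
     det (bottom_right (Bmat n c v \<rho>) n k + c k \<cdot>\<^sub>m ones_mat (n-k)) * (\<Prod>j<k. - v j / 2 - \<rho> j)"
proof -
  define m where "m = Suc n"
  define B where "B = Bmat n c v \<rho>"
  define X where "X = replace_col_ones B k"
  have Bc: "B \<in> carrier_mat m m" unfolding B_def Bmat_def m_def by simp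
  have Be: "\<And>i j. i < m \<Longrightarrow> j < m \<Longrightarrow> B $$ (i,j) = (if i > j then v j - c j
     else if i = j then v j / 2 - c j - \<rho> j else - c i)"
    unfolding B_def Bmat_def m_def by simp
  have Xc: "X \<in> carrier_mat m m" using Bc unfolding X_def replace_col_ones_def by simp
  have Xe: "\<And>i j. i < m \<Longrightarrow> j < m \<Longrightarrow> X $$ (i,j) = (if j = k then 1 else B $$ (i,j))"
    using Bc unfolding X_def replace_col_ones_def by simp
  define R where "R = mat m m (\<lambda>(i,t). (if t = i then 1 else 0) - (if k < i \<and> t = k then 1 else 0 :: real))"
  define E where "E = mat m m (\<lambda>(t,j). (if t = j then 1 else 0) - (if t = k \<and> j < k then v j - c j else 0))"
  have Rc: "R \<in> carrier_mat m m" and Ec: "E \<in> carrier_mat m m" unfolding R_def E_def by auto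
  have dR: "det R = 1"
  proof -
    have "det R = prod_list (diag_mat R)"
      by (rule det_lower_triangular[OF _ Rc]) (auto simp: R_def)
    also have "diag_mat R = map (\<lambda>_. 1) [0..<m]"
      unfolding diag_mat_def R_def by (intro map_cong) auto
    finally show ?thesis by (simp add: map_replicate_const)
  qed
  have dE: "det E = 1"
  proof -
    have "det E = prod_list (diag_mat E)"
      by (rule det_lower_triangular[OF _ Ec]) (auto simp: E_def)
    also have "diag_mat E = map (\<lambda>_. 1) [0..<m]"
      unfolding diag_mat_def E_def by (intro map_cong) auto
    finally show ?thesis by (simp add: map_replicate_const)
  qed
  define Y where "Y = X * E"
  have Yc: "Y \<in> carrier_mat m m" using Xc Ec unfolding Y_def by auto
  have Ye: "Y $$ (i,j) = X $$ (i,j) - (if j < k then X $$ (i,k) * (v j - c j) else 0)"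
    if "i < m" "j < m" for i j
  proof -
    have "Y $$ (i,j) = (\<Sum>t<m. X $$ (i,t) * E $$ (t,j))"
      using that Xc Ec unfolding Y_def
      by (simp add: scalar_prod_def atLeast0LessThan)
    also have "\<dots> = (\<Sum>t<m. (if t = j then X $$ (i,t) else 0) - (if t = k \<and> j < k then X $$ (i,t) * (v j - c j) else 0))"
      using that by (intro sum.cong) (auto simp: E_def algebra_simps)
    also have "\<dots> = X $$ (i,j) - (if j < k then X $$ (i,k) * (v j - c j) else 0)"
      using that kn unfolding sum_subtractf by (auto simp: m_def)
    finally show ?thesis .
  qed
  define M where "M = R * Y"
  have Mc: "M \<in> carrier_mat m m" using Rc Yc unfolding M_def by auto
  have Me: "M $$ (i,j) = Y $$ (i,j) - (if k < i then Y $$ (k,j) else 0)"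
    if "i < m" "j < m" for i j
  proof -
    have "M $$ (i,j) = (\<Sum>t<m. R $$ (i,t) * Y $$ (t,j))"
      using that Rc Yc unfolding M_def
      by (simp add: scalar_prod_def atLeast0LessThan)
    also have "\<dots> = (\<Sum>t<m. (if t = i then Y $$ (t,j) else 0) - (if k < i \<and> t = k then Y $$ (t,j) else 0))"
      using that by (intro sum.cong) (auto simp: R_def)
    also have "\<dots> = Y $$ (i,j) - (if k < i then Y $$ (k,j) else 0)"
      using that kn unfolding sum_subtractf by (auto simp: m_def)
    finally show ?thesis .
  qed
  have km: "k < m" using kn m_def by simp
  have Mfull: "M $$ (i,j) = (X $$ (i,j) - (if j < k then X $$ (i,k) * (v j - c j) else 0))
     - (if k < i then X $$ (k,j) - (if j < k then X $$ (k,k) * (v j - c j) else 0) else 0)"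
    if "i < m" "j < m" for i j
    using that km by (simp add: Me Ye)
  have dM: "det M = det X"
    unfolding M_def Y_def
    using det_mult[OF Rc, of "X * E"] det_mult[OF Xc Ec] Xc Ec dR dE by simp
  have "det M = (\<Prod>l<Suc k. M $$ (l,l)) * det (mat (m - Suc k) (m - Suc k) (\<lambda>(i,j). M $$ (i + Suc k, j + Suc k)))"
  proof (rule peel[OF Mc])
    show "Suc k \<le> m" using km by simp
    fix l i assume "l < Suc k" "l < i" "i < m"
    then show "M $$ (i,l) = 0" using km
      by (auto simp: Mfull Xe Be)
  qed
  also have "(\<Prod>l<Suc k. M $$ (l,l)) = (\<Prod>j<k. - v j / 2 - \<rho> j)"
  proof -
    have "(\<Prod>l<Suc k. M $$ (l,l)) = (\<Prod>l<k. M $$ (l,l)) * M $$ (k,k)" by simp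
    also have "M $$ (k,k) = 1" using km by (simp add: Mfull Xe)
    also have "(\<Prod>l<k. M $$ (l,l)) = (\<Prod>j<k. - v j / 2 - \<rho> j)"
      using km by (intro prod.cong) (auto simp: Mfull Xe Be)
    finally show ?thesis by (simp add: map_replicate_const)
  qed
  also have "mat (m - Suc k) (m - Suc k) (\<lambda>(i,j). M $$ (i + Suc k, j + Suc k))
      = bottom_right B n k + c k \<cdot>\<^sub>m ones_mat (n-k)"
    using km by (intro eq_matI) (auto simp: Mfull Xe Be bottom_right_def ones_mat_def m_def)
  finally show ?thesis using dM unfolding X_def B_def by (simp add: mult.commute)
qed

theorem lemma5p3:
  fixes n :: nat and c v \<rho> :: "nat \<Rightarrow> real"
  assumes "n \<ge> 1"
    and "0 \<le> c 0"
    and "\<And>k. k < n \<Longrightarrow> c k < c (Suc k)"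
    and "\<And>k. k < n \<Longrightarrow> v k \<ge> v (Suc k)"
    and "v n > 0"
    and "\<And>k. k \<le> n \<Longrightarrow> 0 \<le> \<rho> k \<and> \<rho> k < v k / 2"
  shows "det (replace_col_ones (Bmat n c v \<rho>) n) = (\<Prod>j<n. - v j / 2 - \<rho> j)
    \<and> (\<forall>k<n. det (replace_col_ones (Bmat n c v \<rho>) k) =
           det (bottom_right (Bmat n c v \<rho>) n k + c k \<cdot>\<^sub>m ones_mat (n-k)) * (\<Prod>j<k. - v j / 2 - \<rho> j))"
proof
  have "det (bottom_right (Bmat n c v \<rho>) n n + c n \<cdot>\<^sub>m ones_mat (n-n)) = 1"
    by (rule det_dim_zero) (simp add: bottom_right_def ones_mat_def)
  then show "det (replace_col_ones (Bmat n c v \<rho>) n) = (\<Prod>j<n. - v j / 2 - \<rho> j)"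
    using main[of n n c v \<rho>] by simp
  show "\<forall>k<n. det (replace_col_ones (Bmat n c v \<rho>) k) =
           det (bottom_right (Bmat n c v \<rho>) n k + c k \<cdot>\<^sub>m ones_mat (n-k)) * (\<Prod>j<k. - v j / 2 - \<rho> j)"
    using main by simp
qed

end
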